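(* Let $f:\mathbb{N}\to\mathbb{R}$ with $f(1)=1$ be multiplicative (i.e. $f(mn)=f(m)f(n)$ for coprime $m,n$). Assume there exist $C>0$ and $\gamma\in\mathbb{R}$ such that $|f(n)|\leq C n^\gamma$ for all $n\geq 2$. Then $|f^{-1}(n)| \leq n^{\gamma+\frac{\ln(1+C)}{\ln 2}}$ for all $n\geq2$.
   Context: $f^{-1}$ denotes the Dirichlet inverse of $f$: the arithmetic function with $\sum_{d\mid n} f(n/d) f^{-1}(d)=\varepsilon(n)$ for all $n$, where $\varepsilon(1)=1$ and $\varepsilon(n)=0$ for $n\ge2$. *)

theory Defs
  imports Complex_Main "HOL-Computational_Algebra.Primes"
begin

text \<open>Arithmetic functions are functions nat => real; only values at n >= 1 matter.\<close>

definition multiplicative_fn :: "(nat \<Rightarrow> real) \<Rightarrow> bool" where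
  "multiplicative_fn f \<longleftrightarrow>
     (\<forall>m n. m > 0 \<longrightarrow> n > 0 \<longrightarrow> coprime m n \<longrightarrow> f (m * n) = f m * f n)"

definition is_dirichlet_inverse :: "(nat \<Rightarrow> real) \<Rightarrow> (nat \<Rightarrow> real) \<Rightarrow> bool" where
  "is_dirichlet_inverse f g \<longleftrightarrow>
     (\<forall>n. n > 0 \<longrightarrow> (\<Sum>d\<in>{d. d dvd n}. f (n div d) * g d) = (if n = 1 then 1 else 0))"

end

theory Submission
  imports Defs
begin

lemma inv_one:
  assumes "f 1 = 1" "is_dirichlet_inverse f g"
  shows "g 1 = 1"
proof -
  have "{d::nat. d dvd 1} = {1}" by auto
  with assms show ?thesis unfolding is_dirichlet_inverse_def by (auto dest: spec[of _ 1])
qed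

lemma inv_rec:
  assumes "f 1 = 1" "is_dirichlet_inverse f g" "n > 1"
  shows "g n = - (\<Sum>d\<in>{d. d dvd n} - {n}. f (n div d) * g d)"
proof -
  have fin: "finite {d. d dvd n}" using assms(3) by (simp add: finite_divisors_nat)
  have "(\<Sum>d\<in>{d. d dvd n}. f (n div d) * g d) = 0"
    using assms unfolding is_dirichlet_inverse_def by auto
  moreover have "(\<Sum>d\<in>{d. d dvd n}. f (n div d) * g d)
      = f (n div n) * g n + (\<Sum>d\<in>{d. d dvd n} - {n}. f (n div d) * g d)"
    using fin by (subst sum.remove[of _ n]) auto
  ultimately show ?thesis using assms by simp
qed

lemma divisors_bij:
  fixes m n :: nat
  assumes "coprime m n" "m > 0" "n > 0"
  shows "bij_betw (\<lambda>(a,b). a*b) ({a. a dvd m} \<times> {b. b dvd n}) {d. d dvd m*n}"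
proof (rule bij_betwI')
  fix x y assume x: "x \<in> {a. a dvd m} \<times> {b. b dvd n}" and y: "y \<in> {a. a dvd m} \<times> {b. b dvd n}"
  obtain a b where xab: "x = (a,b)" by force
  obtain c d where ycd: "y = (c,d)" by force
  have h: "a dvd m" "b dvd n" "c dvd m" "d dvd n" using x y xab ycd by auto
  have cb: "coprime b m" "coprime d m" "coprime a n" "coprime c n"
    using h assms(1) coprime_commute coprime_divisors dvd_refl by metis+
  show "((case x of (a, b) \<Rightarrow> a * b) = (case y of (a, b) \<Rightarrow> a * b)) = (x = y)"
  proof
    assume e: "(case x of (a, b) \<Rightarrow> a * b) = (case y of (a, b) \<Rightarrow> a * b)"
    hence e': "a*b = c*d" using xab ycd by simp
    have "gcd (a*b) m = gcd a m" using cb(1) by (simp add: gcd_mult_left_right_cancel coprime_commute)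
    also have "\<dots> = a" using h(1) by (simp add: gcd_nat.absorb1)
    finally have 1: "gcd (a*b) m = a" .
    have "gcd (c*d) m = gcd c m" using cb(2) by (simp add: gcd_mult_left_right_cancel coprime_commute)
    also have "\<dots> = c" using h(3) by (simp add: gcd_nat.absorb1)
    finally have 2: "gcd (c*d) m = c" .
    have "gcd (a*b) n = gcd b n" using cb(3) by (simp add: gcd_mult_left_left_cancel coprime_commute)
    also have "\<dots> = b" using h(2) by (simp add: gcd_nat.absorb1)
    finally have 3: "gcd (a*b) n = b" .
    have "gcd (c*d) n = gcd d n" using cb(4) by (simp add: gcd_mult_left_left_cancel coprime_commute)
    also have "\<dots> = d" using h(4) by (simp add: gcd_nat.absorb1)
    finally have 4: "gcd (c*d) n = d" .
    have "a = c" using 1 2 e' by simp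
    moreover have "b = d" using 3 4 e' by simp
    ultimately show "x = y" using xab ycd by simp
  qed simp
next
  fix x assume "x \<in> {a. a dvd m} \<times> {b. b dvd n}"
  then show "(case x of (a, b) \<Rightarrow> a * b) \<in> {d. d dvd m * n}" by (auto intro: mult_dvd_mono)
next
  fix y assume "y \<in> {d. d dvd m * n}"
  then obtain a b where "y = a*b" "a dvd m" "b dvd n" using division_decomp by blast
  then show "\<exists>x\<in>{a. a dvd m} \<times> {b. b dvd n}. y = (case x of (a, b) \<Rightarrow> a * b)" by auto
qed

lemma inv_mult:
  assumes f1: "f 1 = 1" and mf: "multiplicative_fn f" and inv: "is_dirichlet_inverse f g"
  shows "coprime m n \<Longrightarrow> m > 0 \<Longrightarrow> n > 0 \<Longrightarrow> g (m*n) = g m * g n"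
proof (induction "m*n" arbitrary: m n rule: less_induct)
  case (less m n)
  show ?case
  proof (cases "m = 1 \<or> n = 1")
    case True then show ?thesis using inv_one[OF f1 inv] by auto
  next
    case False
    hence m1: "m > 1" and n1: "n > 1" using less.prems by auto
    define Dm where "Dm = {a. a dvd m}"
    define Dn where "Dn = {b. b dvd n}"
    have finm: "finite Dm" and finn: "finite Dn" using less.prems by (auto simp: finite_divisors_nat Dm_def Dn_def)
    have mnD: "(m,n) \<in> Dm \<times> Dn" by (simp add: Dm_def Dn_def)
    have zm: "(\<Sum>a\<in>Dm. f (m div a) * g a) = 0" using inv m1 unfolding is_dirichlet_inverse_def Dm_def by auto
    have zn: "(\<Sum>b\<in>Dn. f (n div b) * g b) = 0" using inv n1 unfolding is_dirichlet_inverse_def Dn_def by auto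
    have mn1: "m * n > 1" using m1 n1 by (metis less_1_mult)
    define F where "F = (\<lambda>d. f (m*n div d) * g d)"
    define T where "T = (\<lambda>x. f (m div fst x) * g (fst x) * (f (n div snd x) * g (snd x)))"
    have "0 = sum F {d. d dvd m*n}" using inv[unfolded is_dirichlet_inverse_def, rule_format, of "m*n"] mn1 less.prems m1 by (simp add: F_def)
    also have "\<dots> = (\<Sum>x\<in>Dm \<times> Dn. F (case x of (a,b) \<Rightarrow> a*b))"
      unfolding Dm_def Dn_def by (rule sum.reindex_bij_betw[symmetric, OF divisors_bij[OF less.prems]])
    also have "\<dots> = (\<Sum>x\<in>Dm \<times> Dn. T x + (if x = (m,n) then g (m*n) - g m * g n else 0))"
    proof (rule sum.cong)
      fix x assume x: "x \<in> Dm \<times> Dn"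
      obtain a b where xab: "x = (a,b)" by force
      have a: "a dvd m" and b: "b dvd n" using x xab Dm_def Dn_def by auto
      show "F (case x of (a,b) \<Rightarrow> a*b) = T x + (if x = (m,n) then g (m*n) - g m * g n else 0)"
      proof (cases "x = (m,n)")
        case True
        then show ?thesis using f1 less.prems by (simp add: F_def T_def)
      next
        case False
        obtain a' where a': "m = a * a'" using a by blast
        obtain b' where b': "n = b * b'" using b by blast
        have pos: "a > 0" "b > 0" "a' > 0" "b' > 0" using a' b' less.prems by auto
        have le: "a \<le> m" "b \<le> n" using a b less.prems by (auto intro: dvd_imp_le)
        have "a * b < m * n"
        proof -
          have "a < m \<or> b < n" using False xab le by auto
          then show ?thesis
          proof
            assume am: "a < m"
            have "a * b < m * b" using am pos by simp
            also have "\<dots> \<le> m * n" using le by simp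
            finally show ?thesis .
          next
            assume bn: "b < n"
            have "a * b < a * n" using bn pos by simp
            also have "\<dots> \<le> m * n" using le by simp
            finally show ?thesis .
          qed
        qed
        moreover have "coprime a b" using a b less.prems(1) coprime_divisors by blast
        ultimately have gab: "g (a*b) = g a * g b" using less.hyps pos by blast
        have cab': "coprime a' b'" using a' b' less.prems(1)
          by (metis coprime_divisors dvd_triv_right)
        have div1: "m * n div (a * b) = a' * b'" using a' b' pos by simp
        have fab: "f (a' * b') = f a' * f b'" using mf cab' pos unfolding multiplicative_fn_def by blast
        have "m div a = a'" "n div b = b'" using a' b' pos by auto
        then show ?thesis using False xab gab div1 fab by (auto simp: F_def T_def)
      qed
    qed simp
    also have "\<dots> = sum T (Dm \<times> Dn) + (g (m*n) - g m * g n)"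
      using finm finn mnD by (simp add: sum.distrib)
    also have "sum T (Dm \<times> Dn) = (\<Sum>a\<in>Dm. f (m div a) * g a) * (\<Sum>b\<in>Dn. f (n div b) * g b)"
      unfolding T_def by (simp add: sum_product sum.cartesian_product case_prod_unfold)
    finally show ?thesis using zm zn by simp
  qed
qed

lemma geom_aux: "(C::real) * (\<Sum>j<k. (1+C)^j) = (1+C)^k - 1"
  by (induction k) (auto simp: algebra_simps)

lemma inv_pp:
  assumes f1: "f 1 = 1" and inv: "is_dirichlet_inverse f g" and C: "C > 0"
    and bd: "\<forall>n\<ge>2. \<bar>f n\<bar> \<le> C * real n powr \<gamma>" and p: "prime (p::nat)"
  shows "\<bar>g (p^k)\<bar> \<le> real (p^k) powr \<gamma> * (1+C)^k"
proof (induction k rule: less_induct)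
  case (less k)
  show ?case
  proof (cases "k = 0")
    case True then show ?thesis using inv_one[OF f1 inv] by simp
  next
    case False
    have p1: "p > 1" using p prime_gt_1_nat by blast
    have pk1: "p^k > 1" using one_less_power[of p k] p1 False by auto
    have seteq: "{d. d dvd p^k} - {p^k} = (\<lambda>j. p^j) ` {..<k}"
    proof
      show "{d. d dvd p^k} - {p^k} \<subseteq> (\<lambda>j. p^j) ` {..<k}"
        using divides_primepow_nat[OF p] by (force simp: le_less)
      show "(\<lambda>j. p^j) ` {..<k} \<subseteq> {d. d dvd p^k} - {p^k}"
        using p1 by (auto simp: le_imp_power_dvd power_inject_exp)
    qed
    have inj: "inj_on (\<lambda>j. p^j) {..<k}" using p1 by (auto simp: inj_on_def power_inject_exp)
    have "g (p^k) = - (\<Sum>d\<in>{d. d dvd p^k} - {p^k}. f (p^k div d) * g d)"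
      by (rule inv_rec[OF f1 inv pk1])
    also have "\<dots> = - (\<Sum>j<k. f (p^k div p^j) * g (p^j))"
      unfolding seteq using inj by (simp add: sum.reindex)
    finally have geq: "g (p^k) = - (\<Sum>j<k. f (p^k div p^j) * g (p^j))" .
    have "\<bar>g (p^k)\<bar> \<le> (\<Sum>j<k. \<bar>f (p^k div p^j) * g (p^j)\<bar>)"
      unfolding geq abs_minus_cancel by (rule sum_abs)
    also have "\<dots> \<le> (\<Sum>j<k. C * real (p^k) powr \<gamma> * (1+C)^j)"
    proof (rule sum_mono)
      fix j assume j: "j \<in> {..<k}"
      have dv: "p^k div p^j = p^(k-j)" using j p1 by (simp add: power_diff)
      have "p^1 \<le> p^(k-j)" using j p1 by (intro power_increasing) auto
      hence ge2: "p^(k-j) \<ge> 2" using p1 by simp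
      have hf: "\<bar>f (p^(k-j))\<bar> \<le> C * real (p^(k-j)) powr \<gamma>" using bd ge2 by blast
      have hg: "\<bar>g (p^j)\<bar> \<le> real (p^j) powr \<gamma> * (1+C)^j" using less j by simp
      have pe: "real (p^(k-j)) * real (p^j) = real (p^k)"
        using j by (simp flip: of_nat_mult power_add)
      have "\<bar>f (p^k div p^j) * g (p^j)\<bar> = \<bar>f (p^(k-j))\<bar> * \<bar>g (p^j)\<bar>" by (simp add: dv abs_mult)
      also have "\<dots> \<le> (C * real (p^(k-j)) powr \<gamma>) * (real (p^j) powr \<gamma> * (1+C)^j)"
        using hf hg by (intro mult_mono) auto
      also have "\<dots> = C * (real (p^(k-j)) * real (p^j)) powr \<gamma> * (1+C)^j"
        by (simp add: powr_mult)
      also have "\<dots> = C * real (p^k) powr \<gamma> * (1+C)^j"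
        using pe by simp
      finally show "\<bar>f (p^k div p^j) * g (p^j)\<bar> \<le> C * real (p^k) powr \<gamma> * (1+C)^j" .
    qed
    also have "\<dots> = real (p^k) powr \<gamma> * (C * (\<Sum>j<k. (1+C)^j))"
      by (simp add: sum_distrib_left algebra_simps)
    also have "\<dots> = real (p^k) powr \<gamma> * ((1+C)^k - 1)" by (simp add: geom_aux)
    also have "\<dots> \<le> real (p^k) powr \<gamma> * (1+C)^k" by (simp add: mult_left_mono)
    finally show ?thesis .
  qed
qed

lemma powr_pow_swap: "(x::real) > 0 \<Longrightarrow> (x^k) powr L = (x powr L)^k"
  by (induction k) (auto simp: powr_mult)

theorem corollary3p3:
  fixes f g :: "nat \<Rightarrow> real" and C \<gamma> :: real
  assumes "f 1 = 1"
    and "multiplicative_fn f"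
    and "C > 0"
    and "\<forall>n\<ge>2. \<bar>f n\<bar> \<le> C * real n powr \<gamma>"
    and "is_dirichlet_inverse f g"
  shows "\<forall>n\<ge>2. \<bar>g n\<bar> \<le> real n powr (\<gamma> + ln (1 + C) / ln 2)"
proof -
  define L where "L = ln (1 + C) / ln 2"
  have L0: "L \<ge> 0" using assms(3) by (simp add: L_def)
  have twoL: "2 powr L = 1 + C" using assms(3) by (simp add: L_def powr_def)
  have main: "n \<ge> 1 \<Longrightarrow> \<bar>g n\<bar> \<le> real n powr (\<gamma> + L)" for n
  proof (induction n rule: less_induct)
    case (less n)
    show ?case
    proof (cases "n = 1")
      case True then show ?thesis using inv_one[OF assms(1) assms(5)] by simp
    next
      case False
      obtain p where p: "prime p" "p dvd n" using prime_factor_nat[OF False] by blast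
      define k where "k = multiplicity p n"
      have nz: "n \<noteq> 0" using less.prems by simp
      have nu: "\<not> is_unit p" using p(1) not_prime_unit by blast
      obtain m where nm0: "n = p ^ multiplicity p n * m" and pm: "\<not> p dvd m"
        using multiplicity_decompose'[OF nz nu] by blast
      have nm: "n = p^k * m" using nm0 by (simp add: k_def)
      have k0: "k > 0" using multiplicity_gt_zero_iff[of n p] nz nu p(2) by (simp add: k_def)
      have p1: "p > 1" using p prime_gt_1_nat by blast
      have m0: "m > 0" using nm less.prems by (cases "m = 0") auto
      have pk1: "p^k > 1" using one_less_power[of p k] p1 k0 by auto
      have mlt: "m < n" using nm pk1 m0 by simp
      have cop: "coprime (p^k) m" using prime_imp_power_coprime_nat[OF p(1) pm] by (simp add: coprime_commute)
      have gn: "g n = g (p^k) * g m" using inv_mult[OF assms(1,2,5) cop] m0 p1 nm by simp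
      have hm: "\<bar>g m\<bar> \<le> real m powr (\<gamma> + L)" using less.IH mlt m0 by simp
      have hp: "\<bar>g (p^k)\<bar> \<le> real (p^k) powr \<gamma> * (1+C)^k"
        by (rule inv_pp[OF assms(1,5,3,4) p(1)])
      have "(1+C)^k = (2 powr L)^k" by (simp add: twoL)
      also have "\<dots> \<le> (real p powr L)^k"
        using p1 L0 by (intro power_mono powr_mono2) auto
      also have "\<dots> = real (p^k) powr L" using p1 by (simp add: powr_pow_swap)
      finally have cp: "(1+C)^k \<le> real (p^k) powr L" .
      have "\<bar>g n\<bar> = \<bar>g (p^k)\<bar> * \<bar>g m\<bar>" by (simp add: gn abs_mult)
      also have "\<dots> \<le> (real (p^k) powr \<gamma> * (1+C)^k) * real m powr (\<gamma> + L)"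
        using hp hm by (intro mult_mono) auto
      also have "\<dots> \<le> (real (p^k) powr \<gamma> * real (p^k) powr L) * real m powr (\<gamma> + L)"
        using cp by (intro mult_right_mono mult_left_mono) auto
      also have "\<dots> = (real (p^k) * real m) powr (\<gamma> + L)"
        by (simp add: powr_add powr_mult)
      also have "\<dots> = real n powr (\<gamma> + L)" by (simp add: nm)
      finally show ?thesis .
    qed
  qed
  show ?thesis using main unfolding L_def by simp
qed

end
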